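(* Let $h:(a,b)\to\mathbb{R}$ and $g:(c,d)\to\mathbb{R}$ be real analytic (not identically zero), where $(c,d)$ contains the image of $h$ and each interval is bounded or unbounded. Assume that the function \[x\mapsto\frac{\kappa(h,x)+\kappa(g,h(x))}{1+\kappa(g\circ h,x)},\qquad\text{with the rule }\tfrac{\infty}{\infty}=1,\] is bounded on $(a,b)$. Then $g$ and $h$ are compatible.
   Context: For a real analytic function $f$ on an open interval, not identically zero, the condition number is $\kappa(f,x)=0$ if $x=0$, $\kappa(f,x)=\infty$ if $x\neq0$ and $f(x)=0$, and $\kappa(f,x)=|x|\,|f'(x)|/|f(x)|$ otherwise; set $\mu(f,x)=1+\kappa(f,x)$. Two such functions $h:(a,b)\to\mathbb{R}$, $g:(c,d)\to\mathbb{R}$ with $h((a,b))\subseteq(c,d)$ are called compatible if there is a constant $C>0$ such that $\mu(g,h(x))\,\mu(h,x)\leq C\,\mu(g\circ h,x)$ for all $x\in(a,b)$ (with the rule $\infty/\infty=1$ when this is read as boundedness of the ratio). *)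

theory Defs
  imports "HOL-Analysis.Analysis" "HOL-Library.Extended_Real"
begin

definition oint :: "ereal \<Rightarrow> ereal \<Rightarrow> real set" where
  "oint a b = {x. a < ereal x \<and> ereal x < b}"

definition real_analytic_on :: "(real \<Rightarrow> real) \<Rightarrow> real set \<Rightarrow> bool" where
  "real_analytic_on f S \<longleftrightarrow>
     (\<forall>x0\<in>S. \<exists>r>0. \<exists>c::nat \<Rightarrow> real.
        \<forall>y. \<bar>y - x0\<bar> < r \<longrightarrow> (\<lambda>n. c n * (y - x0) ^ n) sums f y)"

definition kappa :: "(real \<Rightarrow> real) \<Rightarrow> real \<Rightarrow> ereal" where
  "kappa f x = (if x = 0 then 0
                else if f x = 0 then \<infinity>
                else ereal (\<bar>x\<bar> * \<bar>deriv f x\<bar> / \<bar>f x\<bar>))"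

definition mu :: "(real \<Rightarrow> real) \<Rightarrow> real \<Rightarrow> ereal" where
  "mu f x = 1 + kappa f x"

definition compatible :: "(real \<Rightarrow> real) \<Rightarrow> real set \<Rightarrow> (real \<Rightarrow> real) \<Rightarrow> bool" where
  "compatible h I g \<longleftrightarrow>
     (\<exists>C::real. C > 0 \<and> (\<forall>x\<in>I. mu g (h x) * mu h x \<le> ereal C * mu (g \<circ> h) x))"

definition ediv1 :: "ereal \<Rightarrow> ereal \<Rightarrow> ereal" where
  "ediv1 p q = (if p = \<infinity> \<and> q = \<infinity> then 1 else p / q)"

end

theory Submission
  imports Defs
begin
lemma analytic_diff:
  assumes "real_analytic_on f S" "x0 \<in> S"
  shows "f field_differentiable at x0"
proof -
  obtain r c where r: "r > 0" and hs: "\<forall>y. \<bar>y - x0\<bar> < r \<longrightarrow> (\<lambda>n. c n * (y - x0) ^ n) sums f y"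
    using assms unfolding real_analytic_on_def by blast
  define F where "F = (\<lambda>t::real. \<Sum>n. c n * t ^ n)"
  have eq: "f y = F (y - x0)" if "y \<in> ball x0 r" for y
    using hs that unfolding F_def by (auto simp: dist_real_def sums_iff abs_minus_commute)
  have sm: "summable (\<lambda>n. c n * z ^ n)" if "norm z < r" for z :: real
    using hs[rule_format, of "z + x0"] that by (auto simp: sums_iff)
  have d0: "(F has_field_derivative (\<Sum>n. diffs c n * 0^n)) (at 0)"
    unfolding F_def by (rule termdiffs_strong'[OF sm]) (use r in auto)
  define D where "D = (\<Sum>n. diffs c n * (0::real)^n)"
  have d0': "(F has_field_derivative D) (at ((\<lambda>y. y - x0) x0))"
    using d0 unfolding D_def by simp
  have dg: "((\<lambda>y::real. y - x0) has_field_derivative 1) (at x0)"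
    by (auto intro!: derivative_eq_intros)
  have d1: "((\<lambda>y. F (y - x0)) has_field_derivative (\<Sum>n. diffs c n * 0^n)) (at x0)"
    using DERIV_chain2[OF d0' dg] unfolding D_def by simp
  have "(f has_field_derivative (\<Sum>n. diffs c n * 0^n)) (at x0)"
    by (rule has_field_derivative_transform_within_open[OF d1, of "ball x0 r"]) (use r eq in auto)
  then show ?thesis by (auto simp: field_differentiable_def)
qed

theorem proposition5:
  fixes h g :: "real \<Rightarrow> real" and a b c d :: ereal
  assumes "a < b" and "c < d"
    and "real_analytic_on h (oint a b)" and "\<exists>x\<in>oint a b. h x \<noteq> 0"
    and "real_analytic_on g (oint c d)" and "\<exists>y\<in>oint c d. g y \<noteq> 0"
    and "h ` oint a b \<subseteq> oint c d"
    and "\<exists>B::real. \<forall>x\<in>oint a b.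
           ediv1 (kappa h x + kappa g (h x)) (1 + kappa (g \<circ> h) x) \<le> ereal B"
  shows "compatible h (oint a b) g"
proof -
  obtain B0 :: real where B0: "\<forall>x\<in>oint a b.
           ediv1 (kappa h x + kappa g (h x)) (1 + kappa (g \<circ> h) x) \<le> ereal B0"
    using assms(8) by blast
  define B where "B = max B0 0"
  have B: "ediv1 (kappa h x + kappa g (h x)) (1 + kappa (g \<circ> h) x) \<le> ereal B"
    if "x \<in> oint a b" for x
    using B0 that unfolding B_def by (meson order_trans ereal_less_eq(3) max.cobounded1)
  have "B \<ge> 0" unfolding B_def by simp
  have main: "mu g (h x) * mu h x \<le> ereal (B + 1) * mu (g \<circ> h) x" if x: "x \<in> oint a b" for x
  proof -
    note Bx = B[OF x]
    show ?thesis
    proof (cases "x = 0")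
      case True
      then have "kappa h x = 0" "kappa (g \<circ> h) x = 0" by (auto simp: kappa_def)
      with Bx have "kappa g (h x) \<le> ereal B" by (simp add: ediv1_def)
      then have "1 + kappa g (h x) \<le> ereal (B + 1)"
        by (metis add.commute add_left_mono one_ereal_def plus_ereal.simps(1))
      then show ?thesis using \<open>kappa h x = 0\<close> \<open>kappa (g \<circ> h) x = 0\<close> by (simp add: mu_def)
    next
      case x0: False
      show ?thesis
      proof (cases "h x = 0")
        case hx: True
        show ?thesis
        proof (cases "g 0 = 0")
          case True
          then have "kappa (g \<circ> h) x = \<infinity>" using x0 hx by (simp add: kappa_def)
          then show ?thesis using \<open>B \<ge> 0\<close> by (simp add: mu_def)
        next
          case False
          then obtain r where r: "kappa (g \<circ> h) x = ereal r" "r \<ge> 0" using x0 hx by (simp add: kappa_def)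
          have "kappa h x = \<infinity>" "kappa g (h x) = 0" using x0 hx by (auto simp: kappa_def)
          then have "ediv1 (kappa h x + kappa g (h x)) (1 + kappa (g \<circ> h) x) = \<infinity>"
            using r by (simp add: ediv1_def)
          with Bx show ?thesis by simp
        qed
      next
        case hx: False
        show ?thesis
        proof (cases "g (h x) = 0")
          case True
          then have "kappa (g \<circ> h) x = \<infinity>" using x0 hx by (simp add: kappa_def)
          then show ?thesis using \<open>B \<ge> 0\<close> by (simp add: mu_def)
        next
          case gx: False
          have dh: "h field_differentiable at x" by (rule analytic_diff[OF assms(3) x])
          have dg: "g field_differentiable at (h x)" by (rule analytic_diff[OF assms(5)]) (use assms(7) x in blast)
          have ch: "deriv (g \<circ> h) x = deriv g (h x) * deriv h x" by (rule deriv_chain[OF dh dg])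
          define kh where "kh = \<bar>x\<bar> * \<bar>deriv h x\<bar> / \<bar>h x\<bar>"
          define kg where "kg = \<bar>h x\<bar> * \<bar>deriv g (h x)\<bar> / \<bar>g (h x)\<bar>"
          have kgh: "kg * kh = \<bar>x\<bar> * \<bar>deriv (g \<circ> h) x\<bar> / \<bar>g (h x)\<bar>"
            unfolding kh_def kg_def ch using hx by (simp add: abs_mult field_simps)
          have e: "kappa h x = ereal kh" "kappa g (h x) = ereal kg" "kappa (g \<circ> h) x = ereal (kg * kh)"
            using x0 hx gx by (auto simp: kappa_def kh_def kg_def kgh ch abs_mult)
          have pos: "kh \<ge> 0" "kg \<ge> 0" unfolding kh_def kg_def by auto
          have "(kh + kg) / (1 + kg * kh) \<le> B"
          proof -
            have "kg * kh + 1 \<noteq> 0" using pos by (metis add_nonneg_pos zero_le_mult_iff zero_less_one order_less_irrefl)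
            then show ?thesis using Bx unfolding e ediv1_def using pos by (simp add: add.commute)
          qed
          then have "kh + kg \<le> B * (1 + kg * kh)" using pos
            by (simp add: divide_le_eq add_pos_nonneg)
          then have "(1 + kg) * (1 + kh) \<le> (B + 1) * (1 + kg * kh)"
            by (simp add: algebra_simps)
          then show ?thesis unfolding mu_def e by (simp add: add.commute)
        qed
      qed
    qed
  qed
  show ?thesis unfolding compatible_def
    by (rule exI[of _ "B + 1"]) (use main \<open>B \<ge> 0\<close> in auto)
qed
end
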